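(* Let $0<\gamma<\alpha<1$, $f\in C^1[0,1]$ with $f(0)=0$, $h=\dot f$, $D\in C^1[0,1]$ with $D>0$ on $(0,\alpha)$ and $D<0$ on $(\alpha,1)$, $g\in C^0[0,1]$ with $g<0$ on $(0,\gamma)$, $g>0$ on $(\gamma,1)$, $g(0)=g(\gamma)=g(1)=0$, $q=Dg$. For $c\in\mathbb R$ consider the problem: find $z\in C^0[0,\alpha]\cap C^1(0,\alpha)$ with $\dot z=h-c-q/z$ on $(0,\alpha)$, $z<0$ on $(0,\alpha)$, $z(0)=z(\alpha)=0$. This problem admits a solution for some $c$ if and only if $c^*_{1.1}<c^*_{1.2}$. In that case solutions occur only for a unique real value $c=c_1^*\in(c^*_{1.1},c^*_{1.2})$, and the corresponding solution $z$ is unique.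
   Context: Threshold $c^*$: let $\sigma_1<\sigma_2$ and $H,Q$ continuous on $[\sigma_1,\sigma_2]$ with $Q>0$ on $(\sigma_1,\sigma_2)$, $Q(\sigma_1)=Q(\sigma_2)=0$. For every $c\in\mathbb R$ there is a unique $\zeta_c\in C^0[\sigma_1,\sigma_2]\cap C^1(\sigma_1,\sigma_2)$ with $\dot\zeta_c=H-c-Q/\zeta_c$ and $\zeta_c<0$ on $(\sigma_1,\sigma_2)$ and $\zeta_c(\sigma_2)=0$; define $c^*(Q;H;\sigma_1,\sigma_2):=\sup\{c\in\mathbb R:\zeta_c(\sigma_1)<0\}\in(-\infty,\infty]$. Set $\tilde q(\phi)=-q(1-\phi)$, $\tilde h(\phi)=-h(1-\phi)$. Define $c^*_{1.1}:=-c^*(\tilde q;\tilde h;\max\{1-\alpha,1-\gamma\},1)$ and $c^*_{1.2}:=c^*(q;h;\gamma,\alpha)$. *)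

theory Defs
  imports "HOL-Analysis.Analysis" "HOL-Library.Extended_Real"
begin

definition zeta_cond :: "(real \<Rightarrow> real) \<Rightarrow> (real \<Rightarrow> real) \<Rightarrow> real \<Rightarrow> real \<Rightarrow> real \<Rightarrow> (real \<Rightarrow> real) \<Rightarrow> bool" where
  "zeta_cond Q H s1 s2 c \<zeta> \<longleftrightarrow>
     continuous_on {s1..s2} \<zeta> \<and>
     (\<forall>x\<in>{s1<..<s2}. (\<zeta> has_real_derivative (H x - c - Q x / \<zeta> x)) (at x)) \<and>
     (\<forall>x\<in>{s1<..<s2}. \<zeta> x < 0) \<and> \<zeta> s2 = 0"

definition zeta_c :: "(real \<Rightarrow> real) \<Rightarrow> (real \<Rightarrow> real) \<Rightarrow> real \<Rightarrow> real \<Rightarrow> real \<Rightarrow> real \<Rightarrow> real" where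
  "zeta_c Q H s1 s2 c = (THE \<zeta>. zeta_cond Q H s1 s2 c \<zeta> \<and> (\<forall>x. x \<notin> {s1..s2} \<longrightarrow> \<zeta> x = 0))"

definition cstar :: "(real \<Rightarrow> real) \<Rightarrow> (real \<Rightarrow> real) \<Rightarrow> real \<Rightarrow> real \<Rightarrow> ereal" where
  "cstar Q H s1 s2 = Sup {ereal c | c. zeta_c Q H s1 s2 c s1 < 0}"

definition bvp_sol :: "(real \<Rightarrow> real) \<Rightarrow> (real \<Rightarrow> real) \<Rightarrow> real \<Rightarrow> real \<Rightarrow> (real \<Rightarrow> real) \<Rightarrow> bool" where
  "bvp_sol h q \<alpha> c z \<longleftrightarrow>
     continuous_on {0..\<alpha>} z \<and>
     (\<forall>x\<in>{0<..<\<alpha>}. (z has_real_derivative (h x - c - q x / z x)) (at x)) \<and>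
     (\<forall>x\<in>{0<..<\<alpha>}. z x < 0) \<and> z 0 = 0 \<and> z \<alpha> = 0"

end

theory Submission
  imports Defs
begin


lemma GL:
  fixes \<phi> :: "real \<Rightarrow> real"
  assumes ab: "a \<le> b" and cont: "continuous_on {a..b} \<phi>" and pa: "\<phi> a > 0"
    and der: "\<And>t. a < t \<Longrightarrow> t < b \<Longrightarrow> \<phi> t > 0 \<Longrightarrow> \<exists>D. (\<phi> has_real_derivative D) (at t) \<and> D \<ge> 0"
  shows "\<phi> b > 0"
proof (rule ccontr)
  assume nb: "\<not> \<phi> b > 0"
  let ?S = "{a..b} \<inter> \<phi> -` {..0}"
  have cl: "closed ?S" by (rule continuous_closed_preimage) (use cont in auto)
  have bS: "b \<in> ?S" using nb ab by auto
  have bdd: "bdd_below ?S" by (rule bdd_belowI[of _ a]) auto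
  define s where "s = Inf ?S"
  have sS: "s \<in> ?S" unfolding s_def using closed_contains_Inf[OF _ bdd cl] bS by blast
  have lt: "\<phi> t > 0" if "a \<le> t" "t < s" for t
  proof (rule ccontr)
    assume "\<not> \<phi> t > 0"
    hence "t \<in> ?S" using that sS by auto
    hence "s \<le> t" unfolding s_def using cInf_lower[OF _ bdd] by blast
    thus False using that by simp
  qed
  have as: "a < s" using sS pa by (cases "a = s") auto
  have "\<phi> a \<le> \<phi> s"
  proof (rule DERIV_nonneg_imp_increasing_open[where f=\<phi> and a=a and b=s])
    show "a \<le> s" using as by simp
    show "continuous_on {a..s} \<phi>" using cont sS by (auto intro: continuous_on_subset)
    fix x assume "a < x" "x < s"
    thus "\<exists>y. DERIV \<phi> x :> y \<and> y \<ge> 0" using der[of x] lt[of x] sS by auto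
  qed
  thus False using sS pa by auto
qed

lemma cont_bound:
  fixes f :: "real \<Rightarrow> real"
  assumes "continuous_on {a..b} f"
  shows "\<exists>K\<ge>0. \<forall>t\<in>{a..b}. \<bar>f t\<bar> \<le> K"
proof -
  have "bounded (f ` {a..b})" by (rule compact_imp_bounded[OF compact_continuous_image[OF assms]]) simp
  then obtain K where "\<forall>x\<in>f ` {a..b}. norm x \<le> K" by (auto simp: bounded_iff)
  thus ?thesis by (intro exI[of _ "max K 0"]) auto
qed

lemma int_back_cont:
  fixes g :: "real \<Rightarrow> real"
  assumes "g integrable_on {a..b}"
  shows "continuous_on {a..b} (\<lambda>x. integral {x..b} g)"
proof -
  have "continuous_on {a..b} (\<lambda>x. integral {a..b} g - integral {a..x} g)"
    by (intro continuous_intros indefinite_integral_continuous_1 assms)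
  moreover have "integral {a..b} g - integral {a..x} g = integral {x..b} g" if "x \<in> {a..b}" for x
    using Henstock_Kurzweil_Integration.integral_combine[where a=a and c=x and b=b and f=g] that assms by auto
  ultimately show ?thesis by (rule continuous_on_eq) auto
qed

lemma int_back_deriv:
  fixes g y :: "real \<Rightarrow> real"
  assumes cg: "continuous_on {a..b} g"
    and yi: "\<forall>x\<in>{a..b}. (g has_integral (y0 - y x)) {x..b}"
    and x: "x \<in> {a..b}"
  shows "(y has_real_derivative g x) (at x within {a..b})"
proof -
  have gi: "g integrable_on {a..b}" using cg integrable_continuous_real by blast
  have "((\<lambda>u. integral {a..u} g) has_real_derivative g x) (at x within {a..b})"
    using integral_has_vector_derivative[OF cg x] has_real_derivative_iff_has_vector_derivative by blast
  hence d: "((\<lambda>u. y0 - integral {a..b} g + integral {a..u} g) has_real_derivative g x) (at x within {a..b})"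
    by (auto intro!: derivative_eq_intros)
  show ?thesis
  proof (rule has_field_derivative_transform_within[OF d zero_less_one x])
    fix u assume u: "u \<in> {a..b}" "dist u x < 1"
    have "integral {u..b} g = y0 - y u" using yi u by (auto intro: integral_unique)
    hence "y u = y0 - integral {u..b} g" by simp
    also have "integral {u..b} g = integral {a..b} g - integral {a..u} g"
      using Henstock_Kurzweil_Integration.integral_combine[where a=a and c=u and b=b and f=g] u gi by auto
    finally show "y0 - integral {a..b} g + integral {a..u} g = y u" by simp
  qed
qed




lemma poly_back_int:
  fixes b x :: real assumes "x \<le> b"
  shows "((\<lambda>t. (b - t)^n) has_integral (b - x)^(Suc n) / real (Suc n)) {x..b}"
proof -
  define F where "F t = (-1) * (b - t)^(Suc n) / real (Suc n)" for t
  have "((\<lambda>t. (b - t)^n) has_integral (F b - F x)) {x..b}"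
  proof (rule fundamental_theorem_of_calculus[OF assms])
    fix t assume "t \<in> {x..b}"
    have "(F has_real_derivative (b - t)^n) (at t within {x..b})"
      unfolding F_def by (rule derivative_eq_intros refl | simp)+
    thus "(F has_vector_derivative (b - t)^n) (at t within {x..b})"
      using has_real_derivative_iff_has_vector_derivative by blast
  qed
  thus ?thesis by (simp add: F_def)
qed

lemma picard_back:
  fixes G :: "real \<Rightarrow> real \<Rightarrow> real"
  assumes ab: "a \<le> b" and L: "L \<ge> 0"
    and lip: "\<And>t u v. t \<in> {a..b} \<Longrightarrow> \<bar>G t u - G t v\<bar> \<le> L * \<bar>u - v\<bar>"
    and cont: "\<And>p. continuous_on {a..b} p \<Longrightarrow> continuous_on {a..b} (\<lambda>t. G t (p t))"
  shows "\<exists>y. continuous_on {a..b} y \<and> (\<forall>x\<in>{a..b}. ((\<lambda>t. G t (y t)) has_integral (y0 - y x)) {x..b})"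
proof -
  define p :: "nat \<Rightarrow> real \<Rightarrow> real" where
    "p = rec_nat (\<lambda>_. y0) (\<lambda>n pn x. y0 - integral {x..b} (\<lambda>t. G t (pn t)))"
  have p0: "p 0 = (\<lambda>_. y0)" and pS: "\<And>n. p (Suc n) = (\<lambda>x. y0 - integral {x..b} (\<lambda>t. G t (p n t)))"
    by (simp_all add: p_def)
  have cp: "continuous_on {a..b} (p n)" for n
  proof (induction n)
    case 0 show ?case by (simp add: p0)
  next
    case (Suc n)
    have "continuous_on {a..b} (\<lambda>x. integral {x..b} (\<lambda>t. G t (p n t)))"
      by (rule int_back_cont) (rule integrable_continuous_real[OF cont[OF Suc]])
    thus ?case unfolding pS by (intro continuous_intros)
  qed
  have gi: "(\<lambda>t. G t (p n t)) integrable_on {x..b}" if "x \<in> {a..b}" for n x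
    using integrable_subinterval_real[OF integrable_continuous_real[OF cont[OF cp[of n]]]] that by auto
  obtain K0 where K0: "K0 \<ge> 0" "\<forall>t\<in>{a..b}. \<bar>G t y0\<bar> \<le> K0"
    using cont_bound[OF cont[OF continuous_on_const]] by blast
  define \<beta> where "\<beta> n x = K0 * L^n / fact (Suc n) * (b - x)^(Suc n)" for n x
  have diff: "\<forall>x\<in>{a..b}. \<bar>p (Suc n) x - p n x\<bar> \<le> \<beta> n x" for n
  proof (induction n)
    case 0
    show ?case
    proof
      fix x assume x: "x \<in> {a..b}"
      have "norm (integral {x..b} (\<lambda>t. G t y0)) \<le> K0 * (b - x)"
        using has_integral_bound_real[OF K0(1) finite.emptyI integrable_integral[OF gi[OF x, of 0, unfolded p0]]]
           K0 x by (auto simp: content_real)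
      thus "\<bar>p (Suc 0) x - p 0 x\<bar> \<le> \<beta> 0 x" using x by (simp add: pS p0 \<beta>_def)
    qed
  next
    case (Suc n)
    show ?case
    proof
      fix x assume x: "x \<in> {a..b}"
      have sub: "{x..b} \<subseteq> {a..b}" using x by auto
      have "p (Suc (Suc n)) x - p (Suc n) x = - integral {x..b} (\<lambda>t. G t (p (Suc n) t) - G t (p n t))"
        using integral_diff[OF gi[OF x, of "Suc n"] gi[OF x, of n]] by (simp add: pS)
      hence "\<bar>p (Suc (Suc n)) x - p (Suc n) x\<bar> = norm (integral {x..b} (\<lambda>t. G t (p (Suc n) t) - G t (p n t)))"
        by simp
      also have "\<dots> \<le> integral {x..b} (\<lambda>t. (L * (K0 * L^n / fact (Suc n))) * (b - t)^(Suc n))"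
      proof (rule integral_norm_bound_integral)
        show "(\<lambda>t. G t (p (Suc n) t) - G t (p n t)) integrable_on {x..b}"
          by (intro integrable_diff gi x)
        show "(\<lambda>t. (L * (K0 * L^n / fact (Suc n))) * (b - t)^(Suc n)) integrable_on {x..b}"
          by (intro integrable_continuous_real continuous_intros)
        fix t assume t: "t \<in> {x..b}"
        hence ta: "t \<in> {a..b}" using sub by auto
        have "\<bar>G t (p (Suc n) t) - G t (p n t)\<bar> \<le> L * \<bar>p (Suc n) t - p n t\<bar>" by (rule lip[OF ta])
        also have "\<dots> \<le> L * \<beta> n t" using Suc ta L by (intro mult_left_mono) auto
        finally show "norm (G t (p (Suc n) t) - G t (p n t)) \<le> (L * (K0 * L^n / fact (Suc n))) * (b - t)^(Suc n)"
          by (simp add: \<beta>_def mult.assoc)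
      qed
      also have "\<dots> = (L * (K0 * L^n / fact (Suc n))) * ((b - x)^(Suc (Suc n)) / real (Suc (Suc n)))"
        using integral_unique[OF has_integral_mult_right[OF poly_back_int[of x b "Suc n"]]] x by auto
      also have "\<dots> = \<beta> (Suc n) x"
        by (simp add: \<beta>_def field_simps)
      finally show "\<bar>p (Suc (Suc n)) x - p (Suc n) x\<bar> \<le> \<beta> (Suc n) x" .
    qed
  qed
  have \<beta>nn: "\<beta> n a \<ge> 0" for n using ab K0 L by (simp add: \<beta>_def)
  have \<beta>mono: "\<beta> n x \<le> \<beta> n a" if "x \<in> {a..b}" for n x
    unfolding \<beta>_def using that K0 L by (intro mult_left_mono power_mono) auto
  have \<beta>sum: "summable (\<lambda>n. \<beta> n a)"
  proof (rule summable_comparison_test'[of "\<lambda>n. K0 * (b - a) * (inverse (fact n) * (L * (b - a))^n)"])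
    show "summable (\<lambda>n. K0 * (b - a) * (inverse (fact n) * (L * (b - a))^n))"
      by (intro summable_mult summable_exp)
    fix n :: nat
    have "norm (\<beta> n a) = \<beta> n a" using \<beta>nn[of n] by simp
    also have "\<beta> n a = (K0 * (b - a) * (L * (b - a))^n) / fact (Suc n)"
      by (simp add: \<beta>_def power_mult_distrib mult_ac)
    also have "\<dots> \<le> (K0 * (b - a) * (L * (b - a))^n) / fact n"
      using K0 L ab by (intro divide_left_mono) (auto intro: fact_mono)
    also have "\<dots> = K0 * (b - a) * (inverse (fact n) * (L * (b - a))^n)"
      by (simp add: divide_inverse mult_ac)
    finally show "norm (\<beta> n a) \<le> K0 * (b - a) * (inverse (fact n) * (L * (b - a))^n)" .
  qed
  define SB where "SB = suminf (\<lambda>n. \<beta> n a)"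
  have dsum: "summable (\<lambda>i. p (Suc i) x - p i x)" if x: "x \<in> {a..b}" for x
  proof (rule summable_comparison_test'[OF \<beta>sum, of 0])
    fix i :: nat show "norm (p (Suc i) x - p i x) \<le> \<beta> i a"
      using diff[of i] \<beta>mono[OF x, of i] x by (simp, meson order_trans)
  qed
  have ptel: "p n x = y0 + (\<Sum>i<n. p (Suc i) x - p i x)" for n x
    using sum_lessThan_telescope[of "\<lambda>i. p i x" n] by (simp add: p0)
  define y where "y x = y0 + suminf (\<lambda>i. p (Suc i) x - p i x)" for x
  have pconv: "(\<lambda>n. p n x) \<longlonglongrightarrow> y x" if x: "x \<in> {a..b}" for x
  proof -
    have "(\<lambda>n. y0 + (\<Sum>i<n. p (Suc i) x - p i x)) \<longlonglongrightarrow> y x"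
      unfolding y_def by (intro tendsto_add tendsto_const summable_LIMSEQ dsum x)
    thus ?thesis by (simp only: ptel[symmetric])
  qed
  have pbd: "\<bar>p n x - y0\<bar> \<le> SB" if x: "x \<in> {a..b}" for n x
  proof -
    have "\<bar>p n x - y0\<bar> = \<bar>\<Sum>i<n. p (Suc i) x - p i x\<bar>" using ptel[of n x] by linarith
    also have "\<dots> \<le> (\<Sum>i<n. \<bar>p (Suc i) x - p i x\<bar>)" by (rule sum_abs)
    also have "\<dots> \<le> (\<Sum>i<n. \<beta> i a)"
    proof (intro sum_mono)
      fix i show "\<bar>p (Suc i) x - p i x\<bar> \<le> \<beta> i a"
        using diff[of i] \<beta>mono[OF x, of i] x by (meson order_trans)
    qed
    also have "\<dots> \<le> SB" unfolding SB_def by (rule sum_le_suminf[OF \<beta>sum]) (simp_all add: \<beta>nn)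
    finally show ?thesis .
  qed
  have main: "((\<lambda>t. G t (y t)) has_integral (y0 - y x)) {x..b}" if x: "x \<in> {a..b}" for x
  proof (rule has_integral_dominated_convergence[where f="\<lambda>n t. G t (p n t)" and y="\<lambda>n. y0 - p (Suc n) x"
        and h="\<lambda>_. K0 + L * SB"])
    show "((\<lambda>t. G t (p n t)) has_integral (y0 - p (Suc n) x)) {x..b}" for n
      using integrable_integral[OF gi[OF x, of n]] by (simp add: pS)
    show "(\<lambda>_. K0 + L * SB) integrable_on {x..b}" by (rule integrable_const_ivl)
    show "\<forall>t\<in>{x..b}. norm (G t (p n t)) \<le> K0 + L * SB" for n
    proof
      fix t assume "t \<in> {x..b}"
      hence t: "t \<in> {a..b}" using x by auto
      have "\<bar>G t (p n t)\<bar> \<le> \<bar>G t y0\<bar> + \<bar>G t (p n t) - G t y0\<bar>" by simp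
      also have "\<dots> \<le> K0 + L * SB"
        using K0(2)[rule_format, OF t] lip[OF t, of "p n t" y0] mult_left_mono[OF pbd[OF t, of n] L] by linarith
      finally show "norm (G t (p n t)) \<le> K0 + L * SB" by simp
    qed
    show "\<forall>t\<in>{x..b}. (\<lambda>n. G t (p n t)) \<longlonglongrightarrow> G t (y t)"
    proof
      fix t assume "t \<in> {x..b}"
      hence t: "t \<in> {a..b}" using x by auto
      have "(\<lambda>n. G t (p n t) - G t (y t)) \<longlonglongrightarrow> 0"
      proof (rule Lim_null_comparison)
        show "\<forall>\<^sub>F n in sequentially. norm (G t (p n t) - G t (y t)) \<le> L * \<bar>p n t - y t\<bar>"
          using lip[OF t] by simp
        have "(\<lambda>n. L * \<bar>p n t - y t\<bar>) \<longlonglongrightarrow> L * \<bar>y t - y t\<bar>"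
          by (intro tendsto_intros pconv t)
        thus "(\<lambda>n. L * \<bar>p n t - y t\<bar>) \<longlonglongrightarrow> 0" by simp
      qed
      thus "(\<lambda>n. G t (p n t)) \<longlonglongrightarrow> G t (y t)" by (simp add: LIM_zero_iff)
    qed
    show "(\<lambda>n. y0 - p (Suc n) x) \<longlonglongrightarrow> y0 - y x"
      by (intro tendsto_intros LIMSEQ_Suc pconv x)
  qed
  have yi: "(\<lambda>t. G t (y t)) integrable_on {a..b}" using main[of a] ab by auto
  have "continuous_on {a..b} (\<lambda>x. y0 - integral {x..b} (\<lambda>t. G t (y t)))"
    by (intro continuous_intros int_back_cont yi)
  moreover have "y0 - integral {x..b} (\<lambda>t. G t (y t)) = y x" if "x \<in> {a..b}" for x
    using integral_unique[OF main[OF that]] by simp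
  ultimately have "continuous_on {a..b} y" by (rule continuous_on_eq) auto
  thus ?thesis using main by blast
qed




lemma le_closed_ext:
  fixes f g :: "real \<Rightarrow> real"
  assumes ab: "a < b" and cf: "continuous_on {a..b} f" and cg: "continuous_on {a..b} g"
    and le: "\<And>x. a < x \<Longrightarrow> x < b \<Longrightarrow> f x \<le> g x" and x: "x \<in> {a..b}"
  shows "f x \<le> g x"
proof -
  have cl: "closed ({a..b} \<inter> (\<lambda>x. g x - f x) -` {0..})"
    by (rule continuous_closed_preimage) (auto intro: continuous_intros cf cg)
  have "{a<..<b} \<subseteq> {a..b} \<inter> (\<lambda>x. g x - f x) -` {0..}" using le by auto
  hence "closure {a<..<b} \<subseteq> {a..b} \<inter> (\<lambda>x. g x - f x) -` {0..}" using closure_minimal cl by blast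
  thus ?thesis using ab x by auto
qed

lemma cont_pos_nbhd:
  fixes f :: "real \<Rightarrow> real"
  assumes "continuous_on S f" "x \<in> S" "f x > 0"
  shows "\<exists>e>0. \<forall>y\<in>S. dist y x < e \<longrightarrow> f y > 0"
proof -
  obtain d where d: "d > 0" "\<forall>y\<in>S. dist y x < d \<longrightarrow> dist (f y) (f x) < f x"
    using assms unfolding continuous_on_iff by metis
  show ?thesis using d by (intro exI[of _ d]) (auto simp: dist_real_def)
qed

locale zp =
  fixes Q H :: "real \<Rightarrow> real" and s1 s2 :: real
  assumes s12: "s1 < s2" and cQ: "continuous_on {s1..s2} Q" and cH: "continuous_on {s1..s2} H"
    and Qpos: "\<And>x. s1 < x \<Longrightarrow> x < s2 \<Longrightarrow> Q x > 0"
begin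

abbreviation sol where "sol c z \<equiv> zeta_cond Q H s1 s2 c z"

lemma solD:
  assumes "sol c z"
  shows "continuous_on {s1..s2} z"
    "\<And>x. s1 < x \<Longrightarrow> x < s2 \<Longrightarrow> (z has_real_derivative (H x - c - Q x / z x)) (at x)"
    "\<And>x. s1 < x \<Longrightarrow> x < s2 \<Longrightarrow> z x < 0" "z s2 = 0"
  using assms unfolding zeta_cond_def by auto

lemma sol_le0: assumes "sol c z" "x \<in> {s1..s2}" shows "z x \<le> 0"
  using le_closed_ext[OF s12 solD(1)[OF assms(1)] continuous_on_const, of 0 x] solD(3)[OF assms(1)] assms(2)
  by fastforce

lemma sol_cong:
  assumes "sol c z" and eq: "\<And>x. x \<in> {s1..s2} \<Longrightarrow> z' x = z x"
  shows "sol c z'"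
  unfolding zeta_cond_def
proof (intro conjI ballI)
  show "continuous_on {s1..s2} z'" using continuous_on_eq[OF solD(1)[OF assms(1)]] eq by metis
  show "z' s2 = 0" using eq[of s2] solD(4)[OF assms(1)] s12 by simp
  fix x assume x: "x \<in> {s1<..<s2}"
  show "z' x < 0" using eq[of x] solD(3)[OF assms(1)] x by auto
  have "(z has_real_derivative (H x - c - Q x / z x)) (at x)" using solD(2)[OF assms(1)] x by auto
  hence "(z' has_real_derivative (H x - c - Q x / z x)) (at x)"
    by (rule has_field_derivative_transform_within_open[of _ _ _ "{s1<..<s2}"]) (use x eq in auto)
  thus "(z' has_real_derivative (H x - c - Q x / z' x)) (at x)" using eq[of x] x by auto
qed

lemma cmp_int:
  assumes z: "sol c z" and z': "sol c' z'" and cc: "c \<le> c'" and x0: "s1 < x0" "x0 < s2"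
  shows "z x0 \<le> z' x0"
proof (rule ccontr)
  assume "\<not> z x0 \<le> z' x0"
  have "(\<lambda>t. z t - z' t) s2 > 0"
  proof (rule GL[where a=x0 and b=s2])
    show "x0 \<le> s2" using x0 by simp
    show "continuous_on {x0..s2} (\<lambda>t. z t - z' t)"
      using solD(1)[OF z] solD(1)[OF z'] x0
      by (intro continuous_intros) (auto intro: continuous_on_subset)
    show "z x0 - z' x0 > 0" using \<open>\<not> z x0 \<le> z' x0\<close> by simp
    fix t assume t: "x0 < t" "t < s2" "z t - z' t > 0"
    have t1: "s1 < t" using t x0 by simp
    have d: "((\<lambda>t. z t - z' t) has_real_derivative
        ((H t - c - Q t / z t) - (H t - c' - Q t / z' t))) (at t)"
      by (intro DERIV_diff solD(2)[OF z] solD(2)[OF z'] t1 t(2))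
    have zz: "z' t < 0" "z t < 0" using solD(3)[OF z' t1 t(2)] solD(3)[OF z t1 t(2)] by auto
    have "Q t / z t \<le> Q t / z' t"
      using zz t(3) Qpos[OF t1 t(2)] by (intro divide_left_mono) (auto intro: mult_neg_neg)
    hence "(H t - c - Q t / z t) - (H t - c' - Q t / z' t) \<ge> 0" using cc by simp
    thus "\<exists>D. ((\<lambda>t. z t - z' t) has_real_derivative D) (at t) \<and> D \<ge> 0" using d by blast
  qed
  thus False using solD(4)[OF z] solD(4)[OF z'] by simp
qed

lemma cmp:
  assumes z: "sol c z" and z': "sol c' z'" and cc: "c \<le> c'" and x: "x \<in> {s1..s2}"
  shows "z x \<le> z' x"
  by (rule le_closed_ext[OF s12 solD(1)[OF z] solD(1)[OF z'] cmp_int[OF z z' cc] x])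

lemma uniq:
  assumes "sol c z" "sol c z'" "x \<in> {s1..s2}"
  shows "z x = z' x"
  using cmp[OF assms(1,2) order_refl assms(3)] cmp[OF assms(2,1) order_refl assms(3)] by simp

lemma zc_eq:
  assumes z: "sol c z" and x: "x \<in> {s1..s2}"
  shows "zeta_c Q H s1 s2 c x = z x"
proof -
  define z0 where "z0 x = (if x \<in> {s1..s2} then z x else 0)" for x
  have P: "sol c z0 \<and> (\<forall>x. x \<notin> {s1..s2} \<longrightarrow> z0 x = 0)"
    using sol_cong[OF z, of z0] by (auto simp: z0_def)
  have "zeta_c Q H s1 s2 c = z0" unfolding zeta_c_def
  proof (rule the_equality)
    show "sol c z0 \<and> (\<forall>x. x \<notin> {s1..s2} \<longrightarrow> z0 x = 0)" by (rule P)
    fix w assume w: "sol c w \<and> (\<forall>x. x \<notin> {s1..s2} \<longrightarrow> w x = 0)"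
    show "w = z0"
    proof
      fix y show "w y = z0 y"
        using uniq[of c w z0 y] w P by (cases "y \<in> {s1..s2}") auto
    qed
  qed
  thus ?thesis using x by (simp add: z0_def)
qed

end



lemma V_lip:
  fixes \<delta> u v :: real
  assumes d: "\<delta> > 0"
  shows "\<bar>sqrt (2 * max u 0 + \<delta>^2) - sqrt (2 * max v 0 + \<delta>^2)\<bar> \<le> \<bar>u - v\<bar> / \<delta>"
proof -
  define A where "A = 2 * max u 0 + \<delta>^2"
  define B where "B = 2 * max v 0 + \<delta>^2"
  have A0: "A \<ge> \<delta>^2" and B0: "B \<ge> \<delta>^2" by (auto simp: A_def B_def)
  have sA: "sqrt A \<ge> \<delta>" using real_sqrt_le_mono[OF A0] d by simp
  have sB: "sqrt B \<ge> \<delta>" using real_sqrt_le_mono[OF B0] d by simp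
  have A1: "sqrt A ^ 2 = A" using A0 d by (simp add: order_trans[OF zero_le_power2])
  have B1: "sqrt B ^ 2 = B" using B0 d by (simp add: order_trans[OF zero_le_power2])
  have "\<bar>sqrt A - sqrt B\<bar> * (sqrt A + sqrt B) = \<bar>(sqrt A - sqrt B) * (sqrt A + sqrt B)\<bar>"
    using sA sB d by (simp add: abs_mult)
  also have "(sqrt A - sqrt B) * (sqrt A + sqrt B) = sqrt A ^ 2 - sqrt B ^ 2" by (simp add: algebra_simps power2_eq_square)
  also have "\<dots> = A - B" using A1 B1 by simp
  finally have e: "\<bar>sqrt A - sqrt B\<bar> * (sqrt A + sqrt B) = \<bar>A - B\<bar>" .
  have AB0: "A - B = 2 * (max u 0 - max v 0)" by (simp add: A_def B_def)
  have AB1: "\<bar>max u 0 - max v 0\<bar> \<le> \<bar>u - v\<bar>" by (simp add: max_def; arith)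
  have "\<bar>A - B\<bar> = \<bar>2 * (max u 0 - max v 0)\<bar>" using AB0 by (simp only:)
  also have "\<dots> = 2 * \<bar>max u 0 - max v 0\<bar>" by (simp only: abs_mult abs_numeral)
  finally have "\<bar>A - B\<bar> = 2 * \<bar>max u 0 - max v 0\<bar>" .
  hence AB: "\<bar>A - B\<bar> \<le> 2 * \<bar>u - v\<bar>" using AB1 by linarith
  have "\<bar>sqrt A - sqrt B\<bar> * (2 * \<delta>) \<le> \<bar>sqrt A - sqrt B\<bar> * (sqrt A + sqrt B)"
    using sA sB by (intro mult_left_mono) auto
  hence "\<bar>sqrt A - sqrt B\<bar> * (2 * \<delta>) \<le> 2 * \<bar>u - v\<bar>" using e AB by linarith
  moreover have "\<bar>sqrt A - sqrt B\<bar> * (2 * \<delta>) = 2 * (\<bar>sqrt A - sqrt B\<bar> * \<delta>)" by simp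
  ultimately have "2 * (\<bar>sqrt A - sqrt B\<bar> * \<delta>) \<le> 2 * \<bar>u - v\<bar>" by (simp only:)
  hence "\<bar>sqrt A - sqrt B\<bar> * \<delta> \<le> \<bar>u - v\<bar>" by (simp only: mult_le_cancel_left_pos zero_less_numeral)
  thus ?thesis using d unfolding A_def B_def by (simp add: le_divide_eq)
qed

lemma V_anti:
  fixes A d1 d2 :: real
  assumes "A \<ge> 0" "0 \<le> d1" "d1 \<le> d2"
  shows "sqrt (A + d2^2) - d2 \<le> sqrt (A + d1^2) - d1"
proof -
  define s where "s = sqrt (A + d1^2)"
  have s0: "s \<ge> d1" unfolding s_def using real_sqrt_le_mono[of "d1^2" "A + d1^2"] assms by simp
  have s2: "s^2 = A + d1^2" unfolding s_def using assms by simp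
  have "A + d2^2 \<le> (s + (d2 - d1))^2"
  proof -
    have "(s + (d2 - d1))^2 = s^2 + 2 * s * (d2 - d1) + (d2 - d1)^2" by (simp add: power2_eq_square algebra_simps)
    moreover have "2 * s * (d2 - d1) \<ge> 2 * d1 * (d2 - d1)" using s0 assms by (intro mult_right_mono) auto
    ultimately show ?thesis using s2 by (simp add: power2_eq_square algebra_simps)
  qed
  hence "sqrt (A + d2^2) \<le> sqrt ((s + (d2 - d1))^2)" by (rule real_sqrt_le_mono)
  also have "\<dots> = s + (d2 - d1)" using s0 assms by simp
  finally show ?thesis unfolding s_def by simp
qed

context zp begin

lemma limW:
  fixes W :: "real \<Rightarrow> real" and c :: real
  assumes Wnn: "\<And>x. x \<in> {s1..s2} \<Longrightarrow> W x \<ge> 0"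
    and Wi: "\<And>x. x \<in> {s1..s2} \<Longrightarrow> ((\<lambda>t. Q t + (H t - c) * sqrt (2 * W t)) has_integral W x) {x..s2}"
  shows "sol c (\<lambda>x. - sqrt (2 * W x))"
proof -
  define g where "g t = Q t + (H t - c) * sqrt (2 * W t)" for t
  have Wi': "(g has_integral W x) {x..s2}" if "x \<in> {s1..s2}" for x using Wi[OF that] unfolding g_def .
  have gi: "g integrable_on {s1..s2}" using Wi'[of s1] s12 by (auto simp: has_integral_integrable)
  have Weq: "integral {x..s2} g = W x" if "x \<in> {s1..s2}" for x using integral_unique[OF Wi'[OF that]] .
  have cW: "continuous_on {s1..s2} W"
    using continuous_on_eq[OF int_back_cont[OF gi]] Weq by metis
  have cg: "continuous_on {s1..s2} g" unfolding g_def by (intro continuous_intros cQ cH cW)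
  have dWi: "(W has_real_derivative - g x) (at x)" if x: "s1 < x" "x < s2" for x
  proof -
    have "\<forall>x\<in>{s1..s2}. (g has_integral (0 - (\<lambda>x. - W x) x)) {x..s2}" using Wi' by simp
    from int_back_deriv[OF cg this] x
    have "((\<lambda>x. - W x) has_real_derivative g x) (at x within {s1..s2})" by simp
    hence "((\<lambda>x. - W x) has_real_derivative g x) (at x)" using at_within_Icc_at[OF x] by simp
    from DERIV_minus[OF this] show ?thesis by simp
  qed
  have Ws2: "W s2 = 0" using Weq[of s2] s12 by simp
  have Wpos: "W x > 0" if x: "s1 < x" "x < s2" for x
  proof (rule ccontr)
    assume "\<not> W x > 0"
    hence W0: "W x = 0" using Wnn[of x] x by simp
    have "- g x = 0"
    proof (rule DERIV_local_min[OF dWi[OF x], of "min (x - s1) (s2 - x)"])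
      show "0 < min (x - s1) (s2 - x)" using x by simp
      show "\<forall>y. \<bar>x - y\<bar> < min (x - s1) (s2 - x) \<longrightarrow> W x \<le> W y"
      proof (intro allI impI)
        fix y assume "\<bar>x - y\<bar> < min (x - s1) (s2 - x)"
        hence "y \<in> {s1..s2}" by (simp add: abs_less_iff)
        thus "W x \<le> W y" using Wnn[of y] W0 by simp
      qed
    qed
    moreover have "g x = Q x" using W0 by (simp add: g_def)
    ultimately show False using Qpos[OF x] by simp
  qed
  show ?thesis unfolding zeta_cond_def
  proof (intro conjI ballI)
    show "continuous_on {s1..s2} (\<lambda>x. - sqrt (2 * W x))" by (intro continuous_intros cW)
    show "- sqrt (2 * W s2) = 0" using Ws2 by simp
    fix x assume "x \<in> {s1<..<s2}"
    hence x: "s1 < x" "x < s2" by auto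
    show "- sqrt (2 * W x) < 0" using Wpos[OF x] by simp
    have sp: "sqrt (2 * W x) > 0" using Wpos[OF x] by simp
    have "((\<lambda>x. - sqrt (2 * W x)) has_real_derivative
        - (inverse (sqrt (2 * W x)) / 2 * (2 * - g x))) (at x)"
      by (rule DERIV_minus, rule DERIV_chain2[OF DERIV_real_sqrt], use Wpos[OF x] in simp,
          rule DERIV_cmult, rule dWi[OF x])
    moreover have "- (inverse (sqrt (2 * W x)) / 2 * (2 * - g x)) = H x - c - Q x / - sqrt (2 * W x)"
      using sp by (simp add: g_def field_simps)
    ultimately show "((\<lambda>x. - sqrt (2 * W x)) has_real_derivative
        (H x - c - Q x / - sqrt (2 * W x))) (at x)" by simp
  qed
qed

end



context zp begin

lemma exist: "\<exists>z. sol c z"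
proof -
  obtain M where M: "M \<ge> 0" "\<forall>t\<in>{s1..s2}. \<bar>H t - c\<bar> \<le> M"
    using cont_bound[OF continuous_on_diff[OF cH continuous_on_const]] by blast
  obtain Qb where Qb: "Qb \<ge> 0" "\<forall>t\<in>{s1..s2}. \<bar>Q t\<bar> \<le> Qb" using cont_bound[OF cQ] by blast
  define V where "V \<delta> w = sqrt (2 * max w 0 + \<delta>^2)" for \<delta> w :: real
  define G where "G \<delta> t w = - Q t - max (H t - c) 0 * V \<delta> w + max (c - H t) 0 * (V \<delta> w - \<delta>)" for \<delta> t w
  have Vge: "V \<delta> w \<ge> \<delta>" if "\<delta> \<ge> 0" for \<delta> w
    unfolding V_def using real_sqrt_le_mono[of "\<delta>^2" "2 * max w 0 + \<delta>^2"] that by simp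
  have Glip: "\<bar>G \<delta> t u - G \<delta> t v\<bar> \<le> (M / \<delta>) * \<bar>u - v\<bar>" if d: "\<delta> > 0" and t: "t \<in> {s1..s2}" for \<delta> t u v
  proof -
    have "G \<delta> t u - G \<delta> t v = (c - H t) * (V \<delta> u - V \<delta> v)"
      by (cases "H t \<le> c") (simp_all add: G_def max_def algebra_simps)
    hence "\<bar>G \<delta> t u - G \<delta> t v\<bar> = \<bar>H t - c\<bar> * \<bar>V \<delta> u - V \<delta> v\<bar>" by (simp add: abs_mult abs_minus_commute)
    also have "\<dots> \<le> M * (\<bar>u - v\<bar> / \<delta>)"
    proof (rule mult_mono)
      show "\<bar>H t - c\<bar> \<le> M" using M(2) t by blast
      show "\<bar>V \<delta> u - V \<delta> v\<bar> \<le> \<bar>u - v\<bar> / \<delta>" using V_lip[OF d, of u v] unfolding V_def .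
    qed (use M in auto)
    finally show ?thesis by simp
  qed
  have Gcont: "continuous_on {s1..s2} (\<lambda>t. G \<delta> t (p t))" if "continuous_on {s1..s2} p" for \<delta> p
    unfolding G_def V_def by (intro continuous_intros cQ cH that)
  define \<delta>n where "\<delta>n n = inverse (real (Suc n))" for n
  have \<delta>pos: "\<delta>n n > 0" for n by (simp add: \<delta>n_def)
  have \<delta>le1: "\<delta>n n \<le> 1" for n by (simp add: \<delta>n_def inverse_le_1_iff)
  have \<delta>mono: "\<delta>n m \<le> \<delta>n n" if "n \<le> m" for n m using that by (simp add: \<delta>n_def le_imp_inverse_le)
  have \<delta>lim: "\<delta>n \<longlonglongrightarrow> 0" unfolding \<delta>n_def by (rule LIMSEQ_inverse_real_of_nat)
  have exw: "\<exists>w. continuous_on {s1..s2} w \<and>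
      (\<forall>x\<in>{s1..s2}. ((\<lambda>t. G (\<delta>n n) t (w t)) has_integral (0 - w x)) {x..s2})" for n
  proof (rule picard_back[where L="M / \<delta>n n"])
    show "s1 \<le> s2" using s12 by simp
    show "0 \<le> M / \<delta>n n" using M(1) \<delta>pos[of n] by simp
    show "\<bar>G (\<delta>n n) t u - G (\<delta>n n) t v\<bar> \<le> M / \<delta>n n * \<bar>u - v\<bar>" if "t \<in> {s1..s2}" for t u v
      by (rule Glip[OF \<delta>pos that])
    show "continuous_on {s1..s2} (\<lambda>t. G (\<delta>n n) t (p t))" if "continuous_on {s1..s2} p" for p
      by (rule Gcont[OF that])
  qed
  define wn where "wn n = (SOME w. continuous_on {s1..s2} w \<and>
      (\<forall>x\<in>{s1..s2}. ((\<lambda>t. G (\<delta>n n) t (w t)) has_integral (0 - w x)) {x..s2}))" for n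
  have wn1: "continuous_on {s1..s2} (wn n)" for n
    using someI_ex[OF exw[of n]] unfolding wn_def by blast
  have wn2: "((\<lambda>t. G (\<delta>n n) t (wn n t)) has_integral (0 - wn n x)) {x..s2}" if "x \<in> {s1..s2}" for n x
    using someI_ex[OF exw[of n]] that unfolding wn_def by blast
  have wns2: "wn n s2 = 0" for n
  proof -
    have "integral {s2..s2} (\<lambda>t. G (\<delta>n n) t (wn n t)) = 0 - wn n s2"
      using integral_unique[OF wn2[of s2 n]] s12 by simp
    thus ?thesis by simp
  qed
  have dwn: "(wn n has_real_derivative G (\<delta>n n) x (wn n x)) (at x)" if x: "s1 < x" "x < s2" for n x
  proof -
    have "\<forall>x\<in>{s1..s2}. ((\<lambda>t. G (\<delta>n n) t (wn n t)) has_integral (0 - wn n x)) {x..s2}" using wn2 by blast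
    from int_back_deriv[OF Gcont[OF wn1] this] x
    have "(wn n has_real_derivative G (\<delta>n n) x (wn n x)) (at x within {s1..s2})" by simp
    thus ?thesis using at_within_Icc_at[OF x] by simp
  qed
  have wnn: "wn n x \<ge> 0" if x: "x \<in> {s1..s2}" for n x
  proof (rule ccontr)
    assume neg: "\<not> wn n x \<ge> 0"
    have "(\<lambda>t. - wn n t) s2 > 0"
    proof (rule GL[where a=x and b=s2])
      show "x \<le> s2" using x by simp
      have "{x..s2} \<subseteq> {s1..s2}" using x by auto
      thus "continuous_on {x..s2} (\<lambda>t. - wn n t)" using wn1 by (intro continuous_intros) (rule continuous_on_subset)
      show "- wn n x > 0" using neg by simp
      fix t assume t: "x < t" "t < s2" "- wn n t > 0"
      have t1: "s1 < t" using t x by simp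
      have "((\<lambda>t. - wn n t) has_real_derivative - G (\<delta>n n) t (wn n t)) (at t)"
        by (rule DERIV_minus[OF dwn[OF t1 t(2)]])
      moreover have "- G (\<delta>n n) t (wn n t) \<ge> 0"
      proof -
        have "V (\<delta>n n) (wn n t) = \<delta>n n" using t(3) \<delta>pos[of n] by (simp add: V_def max_def)
        hence "- G (\<delta>n n) t (wn n t) = Q t + max (H t - c) 0 * \<delta>n n" by (simp add: G_def)
        thus ?thesis using Qpos[OF t1 t(2)] \<delta>pos[of n] by simp
      qed
      ultimately show "\<exists>D. ((\<lambda>t. - wn n t) has_real_derivative D) (at t) \<and> D \<ge> 0" by blast
    qed
    thus False using wns2 by simp
  qed
  have Vmono: "V \<delta>1 w \<le> V \<delta>2 w" if "0 < \<delta>1" "\<delta>1 \<le> \<delta>2" for \<delta>1 \<delta>2 w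
    unfolding V_def using that by (intro real_sqrt_le_mono add_left_mono power_mono) auto
  have Vanti: "V \<delta>2 w - \<delta>2 \<le> V \<delta>1 w - \<delta>1" if "0 < \<delta>1" "\<delta>1 \<le> \<delta>2" for \<delta>1 \<delta>2 w
    unfolding V_def using V_anti[of "2 * max w 0" \<delta>1 \<delta>2] that by simp
  have Gmono: "G \<delta>2 t w \<le> G \<delta>1 t w" if "0 < \<delta>1" "\<delta>1 \<le> \<delta>2" for \<delta>1 \<delta>2 t w
  proof -
    have "max (H t - c) 0 * V \<delta>1 w \<le> max (H t - c) 0 * V \<delta>2 w" using Vmono[OF that] by (intro mult_left_mono) auto
    moreover have "max (c - H t) 0 * (V \<delta>2 w - \<delta>2) \<le> max (c - H t) 0 * (V \<delta>1 w - \<delta>1)"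
      using Vanti[OF that] by (intro mult_left_mono) auto
    ultimately show ?thesis unfolding G_def by linarith
  qed
  have wmono: "wn m x \<le> wn n x" if nm: "n \<le> m" and x: "x \<in> {s1..s2}" for n m x
  proof (rule ccontr)
    assume gt: "\<not> wn m x \<le> wn n x"
    define L where "L = M / \<delta>n m"
    have L0: "L \<ge> 0" using M(1) \<delta>pos[of m] by (simp add: L_def)
    define \<phi> where "\<phi> t = (wn m t - wn n t) * exp (L * t)" for t
    have "\<phi> s2 > 0"
    proof (rule GL[where a=x and b=s2])
      show "x \<le> s2" using x by simp
      have "{x..s2} \<subseteq> {s1..s2}" using x by auto
      hence "continuous_on {x..s2} (wn m)" "continuous_on {x..s2} (wn n)"
        using continuous_on_subset[OF wn1] by blast+
      thus "continuous_on {x..s2} \<phi>" unfolding \<phi>_def by (intro continuous_intros)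
      show "\<phi> x > 0" using gt by (simp add: \<phi>_def)
      fix t assume t: "x < t" "t < s2" "\<phi> t > 0"
      have t1: "s1 < t" using t x by simp
      have tt: "t \<in> {s1..s2}" using t1 t by simp
      have dpos: "wn m t - wn n t > 0" using t(3) by (simp add: \<phi>_def zero_less_mult_iff)
      have d1: "((\<lambda>t. wn m t - wn n t) has_real_derivative (G (\<delta>n m) t (wn m t) - G (\<delta>n n) t (wn n t))) (at t)"
        by (rule DERIV_diff[OF dwn[OF t1 t(2)] dwn[OF t1 t(2)]])
      have d2: "((\<lambda>t. exp (L * t)) has_real_derivative exp (L * t) * L) (at t)"
        by (rule derivative_eq_intros refl | simp)+
      have d: "(\<phi> has_real_derivative
          (G (\<delta>n m) t (wn m t) - G (\<delta>n n) t (wn n t)) * exp (L * t) + (exp (L * t) * L) * (wn m t - wn n t)) (at t)"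
        unfolding \<phi>_def by (rule DERIV_mult[OF d1 d2])
      have "G (\<delta>n n) t (wn n t) \<le> G (\<delta>n m) t (wn n t)" by (rule Gmono[OF \<delta>pos \<delta>mono[OF nm]])
      moreover have "\<bar>G (\<delta>n m) t (wn m t) - G (\<delta>n m) t (wn n t)\<bar> \<le> L * \<bar>wn m t - wn n t\<bar>"
        unfolding L_def by (rule Glip[OF \<delta>pos tt])
      ultimately have "G (\<delta>n m) t (wn m t) - G (\<delta>n n) t (wn n t) + L * (wn m t - wn n t) \<ge> 0"
        using dpos by (simp add: abs_if split: if_splits)
      hence "exp (L * t) * (G (\<delta>n m) t (wn m t) - G (\<delta>n n) t (wn n t) + L * (wn m t - wn n t)) \<ge> 0"
        by simp
      hence "(G (\<delta>n m) t (wn m t) - G (\<delta>n n) t (wn n t)) * exp (L * t) + (exp (L * t) * L) * (wn m t - wn n t) \<ge> 0"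
        by (simp add: algebra_simps)
      thus "\<exists>D. (\<phi> has_real_derivative D) (at t) \<and> D \<ge> 0" using d by blast
    qed
    thus False using wns2 by (simp add: \<phi>_def)
  qed
  obtain Bw where Bw: "Bw \<ge> 0" "\<forall>t\<in>{s1..s2}. \<bar>wn 0 t\<bar> \<le> Bw" using cont_bound[OF wn1[of 0]] by blast
  have wbd: "wn n x \<le> Bw" if x: "x \<in> {s1..s2}" for n x
  proof -
    have "wn n x \<le> wn 0 x" using wmono[of 0 n x] x by simp
    also have "\<dots> \<le> Bw" using Bw(2) x by force
    finally show ?thesis .
  qed
  define W where "W x = lim (\<lambda>n. wn n x)" for x
  have Wconv: "(\<lambda>n. wn n x) \<longlonglongrightarrow> W x" if x: "x \<in> {s1..s2}" for x
  proof -
    have "decseq (\<lambda>n. wn n x)" unfolding decseq_def using wmono x by auto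
    moreover have "\<forall>i. 0 \<le> wn i x" using wnn x by blast
    ultimately obtain L where "(\<lambda>n. wn n x) \<longlonglongrightarrow> L" by (rule decseq_convergent)
    thus ?thesis by (simp add: W_def limI)
  qed
  have Wnn: "W x \<ge> 0" if x: "x \<in> {s1..s2}" for x
    using LIMSEQ_le_const[OF Wconv[OF x], of 0] wnn x by auto
  have Wi: "((\<lambda>t. Q t + (H t - c) * sqrt (2 * W t)) has_integral W x) {x..s2}" if x: "x \<in> {s1..s2}" for x
  proof (rule has_integral_dominated_convergence[where f="\<lambda>n t. - G (\<delta>n n) t (wn n t)" and y="\<lambda>n. wn n x"
        and h="\<lambda>_. Qb + M * sqrt (2 * Bw + 1)"])
    show "((\<lambda>t. - G (\<delta>n n) t (wn n t)) has_integral wn n x) {x..s2}" for n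
      using has_integral_neg[OF wn2[OF x, of n]] by simp
    show "(\<lambda>_. Qb + M * sqrt (2 * Bw + 1)) integrable_on {x..s2}" by (rule integrable_const_ivl)
    show "\<forall>t\<in>{x..s2}. norm (- G (\<delta>n n) t (wn n t)) \<le> Qb + M * sqrt (2 * Bw + 1)" for n
    proof
      fix t assume "t \<in> {x..s2}"
      hence t: "t \<in> {s1..s2}" using x by auto
      define v where "v = V (\<delta>n n) (wn n t)"
      have V0: "v \<ge> \<delta>n n" unfolding v_def using Vge \<delta>pos[of n] by (simp add: less_imp_le)
      have "2 * max (wn n t) 0 + (\<delta>n n)^2 \<le> 2 * Bw + 1"
        using wnn[OF t, of n] wbd[OF t, of n] \<delta>le1[of n] \<delta>pos[of n] power_le_one[of "\<delta>n n" 2] by simp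
      hence V1: "v \<le> sqrt (2 * Bw + 1)" unfolding v_def V_def by (rule real_sqrt_le_mono)
      have "\<bar>G (\<delta>n n) t (wn n t)\<bar> \<le> \<bar>Q t\<bar> + \<bar>H t - c\<bar> * v"
      proof (cases "H t \<le> c")
        case True
        hence "G (\<delta>n n) t (wn n t) = - Q t + (c - H t) * (v - \<delta>n n)" by (simp add: G_def v_def max_def)
        moreover have "(c - H t) * (v - \<delta>n n) \<le> (c - H t) * v" using True \<delta>pos[of n] by (intro mult_left_mono) auto
        moreover have "(c - H t) * (v - \<delta>n n) \<ge> 0" using True V0 by simp
        ultimately show ?thesis using True by (simp add: abs_if)
      next
        case False
        hence "G (\<delta>n n) t (wn n t) = - Q t - (H t - c) * v" by (simp add: G_def v_def max_def)
        moreover have "v \<ge> 0" using V0 \<delta>pos[of n] by simp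
        ultimately show ?thesis using abs_triangle_ineq4[of "- Q t" "(H t - c) * v"] by (simp add: abs_mult)
      qed
      also have "\<dots> \<le> Qb + M * sqrt (2 * Bw + 1)"
        using Qb(2) t M(2) V1 V0 \<delta>pos[of n] by (intro add_mono mult_mono) auto
      finally show "norm (- G (\<delta>n n) t (wn n t)) \<le> Qb + M * sqrt (2 * Bw + 1)" by simp
    qed
    show "\<forall>t\<in>{x..s2}. (\<lambda>n. - G (\<delta>n n) t (wn n t)) \<longlonglongrightarrow> Q t + (H t - c) * sqrt (2 * W t)"
    proof
      fix t assume "t \<in> {x..s2}"
      hence t: "t \<in> {s1..s2}" using x by auto
      have A: "(\<lambda>n. - G (\<delta>n n) t (wn n t)) \<longlonglongrightarrow>
         - (- Q t - max (H t - c) 0 * sqrt (2 * max (W t) 0 + 0^2) + max (c - H t) 0 * (sqrt (2 * max (W t) 0 + 0^2) - 0))"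
        unfolding G_def V_def by (intro tendsto_intros Wconv t \<delta>lim)
      have E: "- (- Q t - max (H t - c) 0 * sqrt (2 * max (W t) 0 + 0^2) + max (c - H t) 0 * (sqrt (2 * max (W t) 0 + 0^2) - 0))
          = Q t + (H t - c) * sqrt (2 * W t)"
        using Wnn[OF t] by (cases "H t \<le> c") (simp_all add: max_def algebra_simps)
      from A[unfolded E] show "(\<lambda>n. - G (\<delta>n n) t (wn n t)) \<longlonglongrightarrow> Q t + (H t - c) * sqrt (2 * W t)" .
    qed
    show "(\<lambda>n. wn n x) \<longlonglongrightarrow> W x" by (rule Wconv[OF x])
  qed
  show ?thesis using limW[OF Wnn Wi] by blast
qed

lemma zc_sol: "sol c (zeta_c Q H s1 s2 c)"
proof -
  obtain z where z: "sol c z" using exist by blast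
  show ?thesis by (rule sol_cong[OF z]) (rule zc_eq[OF z])
qed

end



context zp begin

abbreviation zz where "zz c \<equiv> zeta_c Q H s1 s2 c"

lemma zz_le0: "x \<in> {s1..s2} \<Longrightarrow> zz c x \<le> 0"
  by (rule sol_le0[OF zc_sol])

lemma zz_mono: "c \<le> c' \<Longrightarrow> x \<in> {s1..s2} \<Longrightarrow> zz c x \<le> zz c' x"
  by (rule cmp[OF zc_sol zc_sol])

lemma zz_neg: "s1 < x \<Longrightarrow> x < s2 \<Longrightarrow> zz c x < 0"
  by (rule solD(3)[OF zc_sol])

lemma zz_strict:
  assumes cc: "c < c'" and neg: "zz c s1 < 0"
  shows "zz c s1 < zz c' s1"
proof (rule ccontr)
  assume "\<not> zz c s1 < zz c' s1"
  hence eq: "zz c s1 = zz c' s1" using zz_mono[of c c' s1] cc s12 by simp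
  define m where "m = (s1 + s2) / 2"
  have m: "s1 < m" "m < s2" using s12 by (auto simp: m_def)
  have nz: "zz c t < 0" "zz c' t < 0" if "t \<in> {s1..m}" for t
  proof -
    show "zz c t < 0" using that neg zz_neg[of t c] m by (cases "t = s1") auto
    show "zz c' t < 0" using that neg eq zz_neg[of t c'] m by (cases "t = s1") auto
  qed
  have sub: "{s1..m} \<subseteq> {s1..s2}" using m by auto
  define E where "E t = (c' - c) - Q t / zz c t + Q t / zz c' t" for t
  have nz': "zz c t \<noteq> 0" "zz c' t \<noteq> 0" if "t \<in> {s1..m}" for t
    using nz[OF that] by auto
  have cE: "continuous_on {s1..m} E" unfolding E_def
    using continuous_on_subset[OF solD(1)[OF zc_sol] sub] continuous_on_subset[OF cQ sub]
    by (intro continuous_intros) (auto dest: nz')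
  have E1: "E s1 > 0" using eq cc by (simp add: E_def)
  obtain e where e: "e > 0" "\<forall>y\<in>{s1..m}. dist y s1 < e \<longrightarrow> E y > 0"
    using cont_pos_nbhd[OF cE _ E1] m by auto
  define b where "b = min m (s1 + e / 2)"
  have b: "s1 < b" "b \<le> m" using m e by (auto simp: b_def)
  have "(\<lambda>t. zz c t - zz c' t) s1 < (\<lambda>t. zz c t - zz c' t) b"
  proof (rule DERIV_pos_imp_increasing_open[OF b(1)])
    show "continuous_on {s1..b} (\<lambda>t. zz c t - zz c' t)"
      using continuous_on_subset[OF solD(1)[OF zc_sol] order_trans[OF _ sub]] b
      by (intro continuous_intros) auto
    fix t assume t: "s1 < t" "t < b"
    have t2: "t < s2" using t b m by simp
    have "((\<lambda>t. zz c t - zz c' t) has_real_derivative E t) (at t)"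
      unfolding E_def using DERIV_diff[OF solD(2)[OF zc_sol t(1) t2] solD(2)[OF zc_sol t(1) t2]]
      by (simp add: algebra_simps)
    moreover have "E t > 0" using e t b by (auto simp: dist_real_def b_def)
    ultimately show "\<exists>y. ((\<lambda>t. zz c t - zz c' t) has_real_derivative y) (at t) \<and> y > 0" by blast
  qed
  moreover have "zz c b \<le> zz c' b" using zz_mono[of c c' b] cc b m by simp
  ultimately show False using eq by simp
qed

lemma seq_lim:
  assumes cn: "cn \<longlonglongrightarrow> c" and cb: "\<And>n. \<bar>cn n - c\<bar> \<le> 1" and zn: "\<And>n. sol (cn n) (zn n)"
    and conv: "\<And>x. x \<in> {s1..s2} \<Longrightarrow> (\<lambda>n. zn n x) \<longlonglongrightarrow> \<psi> x"
    and bd: "\<And>n x. x \<in> {s1..s2} \<Longrightarrow> \<bar>zn n x\<bar> \<le> B"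
    and x0: "x0 \<in> {s1..s2}"
  shows "\<psi> x0 = zz c x0"
proof -
  obtain M where M: "M \<ge> 0" "\<forall>t\<in>{s1..s2}. \<bar>H t - c\<bar> \<le> M"
    using cont_bound[OF continuous_on_diff[OF cH continuous_on_const]] by blast
  obtain Qb where Qb: "Qb \<ge> 0" "\<forall>t\<in>{s1..s2}. \<bar>Q t\<bar> \<le> Qb" using cont_bound[OF cQ] by blast
  have \<psi>le: "\<psi> x \<le> 0" if x: "x \<in> {s1..s2}" for x
    using LIMSEQ_le_const2[OF conv[OF x], of 0] sol_le0[OF zn x] by auto
  define W where "W x = \<psi> x * \<psi> x / 2" for x
  have sqW: "sqrt (2 * W x) = - \<psi> x" if x: "x \<in> {s1..s2}" for x
  proof -
    have "2 * W x = (- \<psi> x)^2" by (simp add: W_def power2_eq_square)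
    thus ?thesis using \<psi>le[OF x] by simp
  qed
  have Wi: "((\<lambda>t. Q t + (H t - c) * sqrt (2 * W t)) has_integral W x) {x..s2}" if x: "x \<in> {s1..s2}" for x
  proof -
    have "((\<lambda>t. Q t - \<psi> t * (H t - c)) has_integral W x) {x..s2}"
    proof (rule has_integral_dominated_convergence[where f="\<lambda>n t. Q t - zn n t * (H t - cn n)"
          and y="\<lambda>n. zn n x * zn n x / 2" and h="\<lambda>_. Qb + B * (M + 1)"])
      show "((\<lambda>t. Q t - zn n t * (H t - cn n)) has_integral zn n x * zn n x / 2) {x..s2}" for n
      proof -
        have "((\<lambda>t. zn n t * (H t - cn n) - Q t) has_integral
            ((\<lambda>t. zn n t * zn n t / 2) s2 - (\<lambda>t. zn n t * zn n t / 2) x)) {x..s2}"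
        proof (rule fundamental_theorem_of_calculus_interior)
          show "x \<le> s2" using x by simp
          have "{x..s2} \<subseteq> {s1..s2}" using x by auto
          thus "continuous_on {x..s2} (\<lambda>t. zn n t * zn n t / 2)"
            using continuous_on_subset[OF solD(1)[OF zn]] by (intro continuous_intros) auto
          fix t assume "t \<in> {x<..<s2}"
          hence t: "s1 < t" "t < s2" using x by auto
          have d: "(zn n has_real_derivative (H t - cn n - Q t / zn n t)) (at t)" by (rule solD(2)[OF zn t])
          have nz: "zn n t \<noteq> 0" using solD(3)[OF zn[of n] t] by simp
          have "((\<lambda>t. zn n t * zn n t / 2) has_real_derivative
              ((H t - cn n - Q t / zn n t) * zn n t + (H t - cn n - Q t / zn n t) * zn n t) / 2) (at t)"
            by (intro DERIV_cdivide DERIV_mult d)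
          moreover have "((H t - cn n - Q t / zn n t) * zn n t + (H t - cn n - Q t / zn n t) * zn n t) / 2
              = zn n t * (H t - cn n) - Q t" using nz by (simp add: field_simps)
          ultimately show "((\<lambda>t. zn n t * zn n t / 2) has_vector_derivative (zn n t * (H t - cn n) - Q t)) (at t)"
            using has_real_derivative_iff_has_vector_derivative by metis
        qed
        hence "((\<lambda>t. - (zn n t * (H t - cn n) - Q t)) has_integral
            - ((\<lambda>t. zn n t * zn n t / 2) s2 - (\<lambda>t. zn n t * zn n t / 2) x)) {x..s2}"
          by (rule has_integral_neg)
        thus ?thesis using solD(4)[OF zn] by simp
      qed
      show "(\<lambda>_. Qb + B * (M + 1)) integrable_on {x..s2}" by (rule integrable_const_ivl)
      show "\<forall>t\<in>{x..s2}. norm (Q t - zn n t * (H t - cn n)) \<le> Qb + B * (M + 1)" for n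
      proof
        fix t assume "t \<in> {x..s2}"
        hence t: "t \<in> {s1..s2}" using x by auto
        have h1: "\<bar>H t - cn n\<bar> \<le> M + 1" using M(2)[rule_format, OF t] cb[of n] by arith
        have "\<bar>zn n t * (H t - cn n)\<bar> \<le> B * (M + 1)"
          unfolding abs_mult using bd[OF t] h1 order_trans[OF abs_ge_zero bd[OF t]] by (intro mult_mono) auto
        moreover have "\<bar>Q t - zn n t * (H t - cn n)\<bar> \<le> \<bar>Q t\<bar> + \<bar>zn n t * (H t - cn n)\<bar>"
          by (rule abs_triangle_ineq4)
        ultimately show "norm (Q t - zn n t * (H t - cn n)) \<le> Qb + B * (M + 1)"
          using Qb(2)[rule_format, OF t] by simp
      qed
      show "\<forall>t\<in>{x..s2}. (\<lambda>n. Q t - zn n t * (H t - cn n)) \<longlonglongrightarrow> Q t - \<psi> t * (H t - c)"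
      proof
        fix t assume "t \<in> {x..s2}"
        hence t: "t \<in> {s1..s2}" using x by auto
        show "(\<lambda>n. Q t - zn n t * (H t - cn n)) \<longlonglongrightarrow> Q t - \<psi> t * (H t - c)"
          by (intro tendsto_diff tendsto_mult tendsto_const conv[OF t] cn)
      qed
      show "(\<lambda>n. zn n x * zn n x / 2) \<longlonglongrightarrow> W x"
        unfolding W_def by (intro tendsto_intros conv x) simp
    qed
    moreover have "((\<lambda>t. Q t - \<psi> t * (H t - c)) has_integral W x) {x..s2} =
        ((\<lambda>t. Q t + (H t - c) * sqrt (2 * W t)) has_integral W x) {x..s2}"
    proof (rule has_integral_cong)
      fix t assume "t \<in> {x..s2}"
      hence t: "t \<in> {s1..s2}" using x by auto
      show "Q t - \<psi> t * (H t - c) = Q t + (H t - c) * sqrt (2 * W t)"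
        using sqW[OF t] by (simp add: algebra_simps)
    qed
    ultimately show ?thesis by simp
  qed
  have Wnn: "W x \<ge> 0" if "x \<in> {s1..s2}" for x by (simp add: W_def)
  have s: "sol c (\<lambda>x. - sqrt (2 * W x))" by (rule limW[OF Wnn Wi])
  show ?thesis using zc_eq[OF s x0] sqW[OF x0] by simp
qed

end



context zp begin

lemma zz_conv:
  assumes cn: "cn \<longlonglongrightarrow> c" and cb: "\<And>n. \<bar>cn n - c\<bar> \<le> 1" and mc: "monoseq cn" and x: "x \<in> {s1..s2}"
  shows "(\<lambda>n. zz (cn n) x) \<longlonglongrightarrow> zz c x"
proof -
  obtain B where B: "B \<ge> 0" "\<forall>t\<in>{s1..s2}. \<bar>zz (c - 1) t\<bar> \<le> B"
    using cont_bound[OF solD(1)[OF zc_sol]] by blast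
  have bd: "\<bar>zz (cn n) t\<bar> \<le> B" if t: "t \<in> {s1..s2}" for n t
  proof -
    have "c - 1 \<le> cn n" using cb[of n] by (simp add: abs_le_iff)
    hence "zz (c - 1) t \<le> zz (cn n) t" using zz_mono t by blast
    moreover have "zz (cn n) t \<le> 0" by (rule zz_le0[OF t])
    moreover have "\<bar>zz (c - 1) t\<bar> \<le> B" using B(2) t by blast
    ultimately show ?thesis by linarith
  qed
  have cv: "(\<lambda>n. zz (cn n) t) \<longlonglongrightarrow> lim (\<lambda>n. zz (cn n) t)" if t: "t \<in> {s1..s2}" for t
  proof -
    have "Bseq (\<lambda>n. zz (cn n) t)" by (rule BseqI'[of _ B]) (use bd[OF t] in simp)
    moreover have "monoseq (\<lambda>n. zz (cn n) t)"
      using mc unfolding monoseq_def using zz_mono[OF _ t] by blast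
    ultimately show ?thesis using Bseq_monoseq_convergent convergent_LIMSEQ_iff by blast
  qed
  have "lim (\<lambda>n. zz (cn n) x) = zz c x"
    by (rule seq_lim[OF cn cb zc_sol cv bd x])
  thus ?thesis using cv[OF x] by simp
qed

lemma zz_cont: "isCont (\<lambda>c. zz c s1) c0"
proof -
  define e where "e n = inverse (real (Suc n))" for n
  have e0: "e \<longlonglongrightarrow> 0" unfolding e_def by (rule LIMSEQ_inverse_real_of_nat)
  have epos: "e n > 0" for n by (simp add: e_def)
  have e1: "e n \<le> 1" for n by (simp add: e_def inverse_le_1_iff)
  have edec: "decseq e" unfolding decseq_def e_def by (auto intro: le_imp_inverse_le)
  have s1in: "s1 \<in> {s1..s2}" using s12 by simp
  have up: "(\<lambda>n. zz (c0 + e n) s1) \<longlonglongrightarrow> zz c0 s1"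
  proof (rule zz_conv[OF _ _ _ s1in])
    show "(\<lambda>n. c0 + e n) \<longlonglongrightarrow> c0" using tendsto_add[OF tendsto_const e0, of c0] by simp
    show "\<bar>c0 + e n - c0\<bar> \<le> 1" for n using e1[of n] epos[of n] by simp
    show "monoseq (\<lambda>n. c0 + e n)" using edec unfolding monoseq_def decseq_def by auto
  qed
  have dn: "(\<lambda>n. zz (c0 - e n) s1) \<longlonglongrightarrow> zz c0 s1"
  proof (rule zz_conv[OF _ _ _ s1in])
    show "(\<lambda>n. c0 - e n) \<longlonglongrightarrow> c0" using tendsto_diff[OF tendsto_const e0, of c0] by simp
    show "\<bar>c0 - e n - c0\<bar> \<le> 1" for n using e1[of n] epos[of n] by simp
    show "monoseq (\<lambda>n. c0 - e n)" using edec unfolding monoseq_def decseq_def by auto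
  qed
  show ?thesis unfolding isCont_def LIM_eq
  proof (intro allI impI)
    fix r :: real assume r: "r > 0"
    obtain N1 where N1: "\<forall>n\<ge>N1. norm (zz (c0 + e n) s1 - zz c0 s1) < r"
      using up r unfolding LIMSEQ_def dist_real_def by (auto simp: real_norm_def)
    obtain N2 where N2: "\<forall>n\<ge>N2. norm (zz (c0 - e n) s1 - zz c0 s1) < r"
      using dn r unfolding LIMSEQ_def dist_real_def by (auto simp: real_norm_def)
    have a1: "zz (c0 + e N1) s1 - zz c0 s1 < r" using N1 by auto
    have a2: "zz c0 s1 - zz (c0 - e N2) s1 < r" using N2 by auto
    show "\<exists>s>0. \<forall>x. x \<noteq> c0 \<and> norm (x - c0) < s \<longrightarrow> norm (zz x s1 - zz c0 s1) < r"
    proof (intro exI[of _ "min (e N1) (e N2)"] conjI allI impI)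
      show "0 < min (e N1) (e N2)" using epos by simp
      fix x assume "x \<noteq> c0 \<and> norm (x - c0) < min (e N1) (e N2)"
      hence x: "c0 - e N2 \<le> x" "x \<le> c0 + e N1" by (auto simp: abs_less_iff)
      have "zz (c0 - e N2) s1 \<le> zz x s1" by (rule zz_mono[OF x(1) s1in])
      moreover have "zz x s1 \<le> zz (c0 + e N1) s1" by (rule zz_mono[OF x(2) s1in])
      moreover have "zz (c0 - e N2) s1 \<le> zz c0 s1" using epos[of N2] by (intro zz_mono s1in) simp
      moreover have "zz c0 s1 \<le> zz (c0 + e N1) s1" using epos[of N1] by (intro zz_mono s1in) simp
      ultimately show "norm (zz x s1 - zz c0 s1) < r" using a1 a2 by (simp add: abs_less_iff)
    qed
  qed
qed

lemma zz_bound: "\<exists>K. \<forall>c. zz c s1 \<le> (s2 - s1) * (K + c)"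
proof -
  obtain Hb where Hb: "Hb \<ge> 0" "\<forall>t\<in>{s1..s2}. \<bar>H t\<bar> \<le> Hb" using cont_bound[OF cH] by blast
  have "zz c s1 \<le> (s2 - s1) * (Hb + c)" for c
  proof -
    have s: "sol c (zz c)" by (rule zc_sol)
    obtain l \<xi> where \<xi>: "s1 < \<xi>" "\<xi> < s2" "DERIV (zz c) \<xi> :> l" "zz c s2 - zz c s1 = (s2 - s1) * l"
      using MVT[OF s12 solD(1)[OF s]] solD(2)[OF s] real_differentiable_def by metis
    have l: "l = H \<xi> - c - Q \<xi> / zz c \<xi>" using DERIV_unique[OF \<xi>(3) solD(2)[OF s \<xi>(1,2)]] .
    have "Q \<xi> / zz c \<xi> < 0" using Qpos[OF \<xi>(1,2)] solD(3)[OF s \<xi>(1,2)] by (simp add: divide_pos_neg)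
    moreover have "\<bar>H \<xi>\<bar> \<le> Hb" using Hb(2) \<xi>(1,2) by simp
    hence "H \<xi> \<ge> - Hb" by linarith
    ultimately have "l \<ge> - Hb - c" using l by linarith
    hence "(s2 - s1) * l \<ge> (s2 - s1) * (- Hb - c)" using s12 by (intro mult_left_mono) auto
    thus ?thesis using \<xi>(4) solD(4)[OF s] by (simp add: algebra_simps)
  qed
  thus ?thesis by blast
qed

lemma char: "zz c s1 < 0 \<longleftrightarrow> ereal c < cstar Q H s1 s2"
proof
  assume neg: "zz c s1 < 0"
  obtain s where s: "s > 0" "\<forall>x. x \<noteq> c \<and> norm (x - c) < s \<longrightarrow> norm (zz x s1 - zz c s1) < - zz c s1"
    using zz_cont[of c] neg unfolding isCont_def LIM_eq by (metis neg_0_less_iff_less)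
  have "norm (zz (c + s / 2) s1 - zz c s1) < - zz c s1" using s by auto
  hence "zz (c + s / 2) s1 < 0" by (simp add: abs_less_iff)
  hence "ereal (c + s / 2) \<in> {ereal c | c. zeta_c Q H s1 s2 c s1 < 0}" by blast
  hence "ereal (c + s / 2) \<le> cstar Q H s1 s2" unfolding cstar_def by (rule Sup_upper)
  moreover have "ereal c < ereal (c + s / 2)" using s by simp
  ultimately show "ereal c < cstar Q H s1 s2" using order.strict_trans2 by blast
next
  assume "ereal c < cstar Q H s1 s2"
  then obtain x where x: "x \<in> {ereal c | c. zeta_c Q H s1 s2 c s1 < 0}" "ereal c < x"
    unfolding cstar_def less_Sup_iff by blast
  then obtain c' where c': "x = ereal c'" "zz c' s1 < 0" by blast
  have "c \<le> c'" using x(2) c'(1) by simp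
  hence "zz c s1 \<le> zz c' s1" using zz_mono s12 by simp
  thus "zz c s1 < 0" using c'(2) by simp
qed

end



lemma glue_deriv:
  fixes z E :: "real \<Rightarrow> real"
  assumes um: "u < m" and mv: "m < v" and cz: "continuous_on {u..v} z" and cE: "continuous_on {u..v} E"
    and dz: "\<And>x. u < x \<Longrightarrow> x < v \<Longrightarrow> x \<noteq> m \<Longrightarrow> (z has_real_derivative E x) (at x)"
  shows "(z has_real_derivative E m) (at m)"
proof -
  have ftc: "(E has_integral (z t - z s)) {s..t}" if st: "u \<le> s" "s \<le> t" "t \<le> v" "t \<le> m \<or> m \<le> s" for s t
  proof (rule fundamental_theorem_of_calculus_interior[OF st(2)])
    show "continuous_on {s..t} z" using cz st by (auto intro: continuous_on_subset)
    fix x assume "x \<in> {s<..<t}"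
    hence x: "u < x" "x < v" "x \<noteq> m" using st by auto
    show "(z has_vector_derivative E x) (at x)"
      using dz[OF x] has_real_derivative_iff_has_vector_derivative by blast
  qed
  have int: "(E has_integral (z t - z u)) {u..t}" if t: "u \<le> t" "t \<le> v" for t
  proof (cases "t \<le> m")
    case True thus ?thesis using ftc[of u t] t by simp
  next
    case False
    have "(E has_integral ((z m - z u) + (z t - z m))) {u..t}"
      by (rule has_integral_combine[of u m t]) (use um False t ftc in auto)
    thus ?thesis by simp
  qed
  have "((\<lambda>t. integral {u..t} E) has_real_derivative E m) (at m within {u..v})"
    using integral_has_vector_derivative[OF cE, of m] um mv has_real_derivative_iff_has_vector_derivative by auto
  hence "((\<lambda>t. z u + integral {u..t} E) has_real_derivative E m) (at m)"
    using at_within_Icc_at[OF um mv] by (auto intro!: derivative_eq_intros)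
  thus ?thesis
  proof (rule has_field_derivative_transform_within_open[of _ _ _ "{u<..<v}"])
    show "open {u<..<v}" by simp
    show "m \<in> {u<..<v}" using um mv by simp
    fix x assume "x \<in> {u<..<v}"
    thus "z u + integral {u..x} E = z x" using integral_unique[OF int[of x]] by simp
  qed
qed




theorem lemma4p4:
  fixes \<gamma> \<alpha> :: real and f h D g q :: "real \<Rightarrow> real"
  assumes "0 < \<gamma>" and "\<gamma> < \<alpha>" and "\<alpha> < 1"
    and "\<forall>x\<in>{0..1}. (f has_real_derivative h x) (at x within {0..1})"
    and "continuous_on {0..1} h" and "f 0 = 0"
    and "\<exists>D'. (\<forall>x\<in>{0..1}. (D has_real_derivative D' x) (at x within {0..1}))
               \<and> continuous_on {0..1} D'"
    and "\<forall>x\<in>{0<..<\<alpha>}. D x > 0" and "\<forall>x\<in>{\<alpha><..<1}. D x < 0"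
    and "continuous_on {0..1} g"
    and "\<forall>x\<in>{0<..<\<gamma>}. g x < 0" and "\<forall>x\<in>{\<gamma><..<1}. g x > 0"
    and "g 0 = 0" and "g \<gamma> = 0" and "g 1 = 0"
    and "\<forall>x. q x = D x * g x"
  defines "c11 \<equiv> - cstar (\<lambda>\<phi>. - q (1 - \<phi>)) (\<lambda>\<phi>. - h (1 - \<phi>)) (max (1 - \<alpha>) (1 - \<gamma>)) 1"
    and "c12 \<equiv> cstar q h \<gamma> \<alpha>"
  shows "((\<exists>c z. bvp_sol h q \<alpha> c z) \<longleftrightarrow> c11 < c12) \<and>
         (c11 < c12 \<longrightarrow>
           (\<exists>c1. c11 < ereal c1 \<and> ereal c1 < c12 \<and>
                (\<exists>z. bvp_sol h q \<alpha> c1 z) \<and>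
                (\<forall>c z. bvp_sol h q \<alpha> c z \<longrightarrow> c = c1) \<and>
                (\<forall>z1 z2. bvp_sol h q \<alpha> c1 z1 \<longrightarrow> bvp_sol h q \<alpha> c1 z2 \<longrightarrow>
                          (\<forall>x\<in>{0..\<alpha>}. z1 x = z2 x))))"
proof -
  note g0 = \<open>0 < \<gamma>\<close> and ga = \<open>\<gamma> < \<alpha>\<close> and a1 = \<open>\<alpha> < 1\<close>
  obtain D' where D': "\<forall>x\<in>{0..1}. (D has_real_derivative D' x) (at x within {0..1})"
    using assms(7) by blast
  have cD: "continuous_on {0..1} D"
    unfolding continuous_on_eq_continuous_within using D' DERIV_continuous by blast
  have qeq: "q = (\<lambda>x. D x * g x)" using assms(16) by auto
  have cq: "continuous_on {0..1} q" unfolding qeq by (intro continuous_intros cD assms(10))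
  have ch: "continuous_on {0..1} h" by (rule assms(5))
  have sub1: "{\<gamma>..\<alpha>} \<subseteq> {0..1}" using g0 a1 by auto
  interpret P1: zp q h \<gamma> \<alpha>
  proof
    show "\<gamma> < \<alpha>" by (rule ga)
    show "continuous_on {\<gamma>..\<alpha>} q" by (rule continuous_on_subset[OF cq sub1])
    show "continuous_on {\<gamma>..\<alpha>} h" by (rule continuous_on_subset[OF ch sub1])
    fix x assume x: "\<gamma> < x" "x < \<alpha>"
    have "D x > 0" using assms(8) x g0 by auto
    moreover have "g x > 0" using assms(12) x a1 by auto
    ultimately show "q x > 0" by (simp add: qeq)
  qed
  define Q2 where "Q2 = (\<lambda>\<phi>. - q (1 - \<phi>))"
  define H2 where "H2 = (\<lambda>\<phi>. - h (1 - \<phi>))"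
  have img2: "(\<lambda>\<phi>::real. 1 - \<phi>) ` {1 - \<gamma>..1} \<subseteq> {0..1}" using g0 ga a1 by auto
  interpret P2: zp Q2 H2 "1 - \<gamma>" 1
  proof
    show "1 - \<gamma> < 1" using g0 by simp
    show "continuous_on {1 - \<gamma>..1} Q2" unfolding Q2_def
      by (intro continuous_intros continuous_on_compose2[OF cq _ img2])
    show "continuous_on {1 - \<gamma>..1} H2" unfolding H2_def
      by (intro continuous_intros continuous_on_compose2[OF ch _ img2])
    fix x assume x: "1 - \<gamma> < x" "x < 1"
    have "D (1 - x) > 0" using assms(8) x ga by auto
    moreover have "g (1 - x) < 0" using assms(11) x by auto
    ultimately show "Q2 x > 0" by (simp add: Q2_def qeq mult_pos_neg)
  qed
  have c11eq: "c11 = - cstar Q2 H2 (1 - \<gamma>) 1"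
    unfolding c11_def Q2_def H2_def using ga by (simp add: max_def)
  define Z1 where "Z1 c = zeta_c q h \<gamma> \<alpha> c" for c
  define Z2 where "Z2 c = zeta_c Q2 H2 (1 - \<gamma>) 1 (- c)" for c
  define a where "a c = Z1 c \<gamma>" for c
  define b where "b c = Z2 c (1 - \<gamma>)" for c
  have achar: "a c < 0 \<longleftrightarrow> ereal c < c12" for c unfolding a_def Z1_def c12_def by (rule P1.char)
  have bchar: "b c < 0 \<longleftrightarrow> c11 < ereal c" for c
  proof -
    have "b c < 0 \<longleftrightarrow> ereal (- c) < cstar Q2 H2 (1 - \<gamma>) 1" unfolding b_def Z2_def by (rule P2.char)
    also have "\<dots> \<longleftrightarrow> - ereal c < cstar Q2 H2 (1 - \<gamma>) 1" by simp
    also have "\<dots> \<longleftrightarrow> c11 < ereal c" unfolding c11eq by (rule ereal_uminus_less_reorder)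
    finally show ?thesis .
  qed
  have ale: "a c \<le> 0" for c unfolding a_def Z1_def by (rule P1.zz_le0) (use ga in simp)
  have ble: "b c \<le> 0" for c unfolding b_def Z2_def by (rule P2.zz_le0) (use g0 in simp)
  have amono: "a c \<le> a c'" if "c \<le> c'" for c c' unfolding a_def Z1_def by (rule P1.zz_mono) (use that ga in simp_all)
  have bmono: "b c' \<le> b c" if "c \<le> c'" for c c' unfolding b_def Z2_def by (rule P2.zz_mono) (use that g0 in simp_all)
  have astrict: "a c < a c'" if "c < c'" "a c < 0" for c c'
    using P1.zz_strict[OF that(1)] that(2) unfolding a_def Z1_def by simp
  have acont: "isCont a c" for c unfolding a_def Z1_def by (rule P1.zz_cont)
  have bcont: "isCont b c" for c
  proof -
    have "isCont (\<lambda>d. zeta_c Q2 H2 (1 - \<gamma>) 1 d (1 - \<gamma>)) (- c)" by (rule P2.zz_cont)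
    moreover have "isCont (\<lambda>x::real. - x) c" by (intro continuous_intros)
    ultimately show ?thesis unfolding b_def Z2_def using isCont_o2 by blast
  qed
  obtain Ka where Ka: "\<forall>c. a c \<le> (\<alpha> - \<gamma>) * (Ka + c)" using P1.zz_bound unfolding a_def Z1_def by blast
  obtain Kb where Kb0: "\<forall>d. zeta_c Q2 H2 (1 - \<gamma>) 1 d (1 - \<gamma>) \<le> (1 - (1 - \<gamma>)) * (Kb + d)" using P2.zz_bound by blast
  have Kb: "b c \<le> \<gamma> * (Kb - c)" for c using Kb0[rule_format, of "- c"] unfolding b_def Z2_def by simp
  have restr: "(\<forall>x\<in>{\<gamma>..\<alpha>}. Z1 c x = z x) \<and> (\<forall>\<phi>\<in>{1 - \<gamma>..1}. Z2 c \<phi> = z (1 - \<phi>))"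
    if bv: "bvp_sol h q \<alpha> c z" for c z
  proof -
    have cz: "continuous_on {0..\<alpha>} z" and dz: "\<And>x. 0 < x \<Longrightarrow> x < \<alpha> \<Longrightarrow> (z has_real_derivative (h x - c - q x / z x)) (at x)"
      and nz: "\<And>x. 0 < x \<Longrightarrow> x < \<alpha> \<Longrightarrow> z x < 0" and z0: "z 0 = 0" and za: "z \<alpha> = 0"
      using bv unfolding bvp_sol_def by auto
    have s1: "P1.sol c z" unfolding zeta_cond_def
    proof (intro conjI ballI)
      show "continuous_on {\<gamma>..\<alpha>} z" using cz g0 by (auto intro: continuous_on_subset)
      fix x assume "x \<in> {\<gamma><..<\<alpha>}"
      hence x: "0 < x" "x < \<alpha>" using g0 by auto
      show "(z has_real_derivative (h x - c - q x / z x)) (at x)" by (rule dz[OF x])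
      show "z x < 0" by (rule nz[OF x])
    qed (rule za)
    have img: "(\<lambda>\<phi>::real. 1 - \<phi>) ` {1 - \<gamma>..1} \<subseteq> {0..\<alpha>}" using g0 ga by auto
    have s2: "P2.sol (- c) (\<lambda>\<phi>. z (1 - \<phi>))" unfolding zeta_cond_def
    proof (intro conjI ballI)
      show "continuous_on {1 - \<gamma>..1} (\<lambda>\<phi>. z (1 - \<phi>))"
        by (intro continuous_on_compose2[OF cz _ img] continuous_intros)
      show "z (1 - 1) = 0" using z0 by simp
      fix \<phi> assume "\<phi> \<in> {1 - \<gamma><..<1}"
      hence x: "0 < 1 - \<phi>" "1 - \<phi> < \<alpha>" using ga by auto
      show "z (1 - \<phi>) < 0" by (rule nz[OF x])
      have dd: "((\<lambda>\<phi>. z (1 - \<phi>)) has_real_derivative (h (1 - \<phi>) - c - q (1 - \<phi>) / z (1 - \<phi>)) * (-1)) (at \<phi>)"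
        by (rule DERIV_chain2[where g="\<lambda>\<phi>. 1 - \<phi>", OF dz[OF x]]) (rule derivative_eq_intros refl | simp)+
      have ee: "(h (1 - \<phi>) - c - q (1 - \<phi>) / z (1 - \<phi>)) * (-1) = H2 \<phi> - - c - Q2 \<phi> / z (1 - \<phi>)"
        by (simp add: H2_def Q2_def)
      from dd[unfolded ee] show "((\<lambda>\<phi>. z (1 - \<phi>)) has_real_derivative (H2 \<phi> - - c - Q2 \<phi> / z (1 - \<phi>))) (at \<phi>)" .
    qed
    show ?thesis
      using P1.zc_eq[OF s1] P2.zc_eq[OF s2] unfolding Z1_def Z2_def by auto
  qed
  have solab: "a c = z \<gamma> \<and> b c = z \<gamma> \<and> z \<gamma> < 0" if bv: "bvp_sol h q \<alpha> c z" for c z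
  proof -
    have "z \<gamma> < 0" using bv g0 ga unfolding bvp_sol_def by auto
    moreover have "a c = z \<gamma>" using restr[OF bv] ga unfolding a_def by auto
    moreover have "b c = z \<gamma>" using restr[OF bv] g0 unfolding b_def by auto
    ultimately show ?thesis by simp
  qed
  have glue: "bvp_sol h q \<alpha> c (\<lambda>x. if x \<le> \<gamma> then Z2 c (1 - x) else Z1 c x)" if ab: "a c = b c" "a c < 0" for c
  proof -
    define z where "z x = (if x \<le> \<gamma> then Z2 c (1 - x) else Z1 c x)" for x
    have S1: "P1.sol c (Z1 c)" unfolding Z1_def by (rule P1.zc_sol)
    have S2: "P2.sol (- c) (Z2 c)" unfolding Z2_def by (rule P2.zc_sol)
    have img: "(\<lambda>x::real. 1 - x) ` {0..\<gamma>} \<subseteq> {1 - \<gamma>..1}" using g0 by auto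
    have zg: "z \<gamma> = a c" using ab unfolding z_def a_def b_def by simp
    have cz1: "continuous_on {0..\<gamma>} z"
    proof -
      have "continuous_on {0..\<gamma>} (\<lambda>x. Z2 c (1 - x))"
        by (intro continuous_on_compose2[OF P2.solD(1)[OF S2] _ img] continuous_intros)
      thus ?thesis by (rule continuous_on_eq) (auto simp: z_def)
    qed
    have cz2: "continuous_on {\<gamma>..\<alpha>} z"
    proof -
      have "continuous_on {\<gamma>..\<alpha>} (Z1 c)" by (rule P1.solD(1)[OF S1])
      thus ?thesis by (rule continuous_on_eq) (use ab in \<open>auto simp: z_def a_def b_def\<close>)
    qed
    have cz: "continuous_on {0..\<alpha>} z"
    proof -
      have "continuous_on ({0..\<gamma>} \<union> {\<gamma>..\<alpha>}) z" by (rule continuous_on_closed_Un[OF _ _ cz1 cz2]) auto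
      moreover have "{0..\<gamma>} \<union> {\<gamma>..\<alpha>} = {0..\<alpha>}" using g0 ga by auto
      ultimately show ?thesis by simp
    qed
    have nz: "z x < 0" if x: "0 < x" "x < \<alpha>" for x
    proof -
      consider "x < \<gamma>" | "x = \<gamma>" | "\<gamma> < x" by linarith
      thus ?thesis
      proof cases
        case 1 thus ?thesis using P2.solD(3)[OF S2, of "1 - x"] x by (simp add: z_def)
      next
        case 2 thus ?thesis using zg ab by simp
      next
        case 3 thus ?thesis using P1.solD(3)[OF S1, of x] x by (simp add: z_def)
      qed
    qed
    have dz: "(z has_real_derivative (h x - c - q x / z x)) (at x)" if x: "0 < x" "x < \<alpha>" "x \<noteq> \<gamma>" for x
    proof (cases "x < \<gamma>")
      case True
      have x2: "1 - \<gamma> < 1 - x" "1 - x < 1" using True x by auto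
      have dd: "((\<lambda>x. Z2 c (1 - x)) has_real_derivative (H2 (1 - x) - - c - Q2 (1 - x) / Z2 c (1 - x)) * (-1)) (at x)"
        by (rule DERIV_chain2[where g="\<lambda>x. 1 - x", OF P2.solD(2)[OF S2 x2]]) (rule derivative_eq_intros refl | simp)+
      have ee: "(H2 (1 - x) - - c - Q2 (1 - x) / Z2 c (1 - x)) * (-1) = h x - c - q x / z x"
        using True by (simp add: H2_def Q2_def z_def)
      from dd[unfolded ee] have "((\<lambda>x. Z2 c (1 - x)) has_real_derivative (h x - c - q x / z x)) (at x)" .
      thus ?thesis
        by (rule has_field_derivative_transform_within_open[of _ _ _ "{0<..<\<gamma>}"]) (use True x in \<open>auto simp: z_def\<close>)
    next
      case False
      hence x2: "\<gamma> < x" using x by simp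
      have "(Z1 c has_real_derivative (h x - c - q x / Z1 c x)) (at x)" by (rule P1.solD(2)[OF S1 x2 x(2)])
      hence "(Z1 c has_real_derivative (h x - c - q x / z x)) (at x)" using x2 by (simp add: z_def)
      thus ?thesis
        by (rule has_field_derivative_transform_within_open[of _ _ _ "{\<gamma><..<\<alpha>}"]) (use x2 x in \<open>auto simp: z_def\<close>)
    qed
    have dzg: "(z has_real_derivative (h \<gamma> - c - q \<gamma> / z \<gamma>)) (at \<gamma>)"
    proof (rule glue_deriv[where u="\<gamma> / 2" and v="(\<gamma> + \<alpha>) / 2" and E="\<lambda>t. h t - c - q t / z t"])
      show "\<gamma> / 2 < \<gamma>" "\<gamma> < (\<gamma> + \<alpha>) / 2" using g0 ga by auto
      have sub: "{\<gamma> / 2..(\<gamma> + \<alpha>) / 2} \<subseteq> {0..\<alpha>}" using g0 ga by auto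
      have sub': "{\<gamma> / 2..(\<gamma> + \<alpha>) / 2} \<subseteq> {0..1}" using g0 ga a1 by auto
      show cz': "continuous_on {\<gamma> / 2..(\<gamma> + \<alpha>) / 2} z" by (rule continuous_on_subset[OF cz sub])
      have nz': "z t \<noteq> 0" if "t \<in> {\<gamma> / 2..(\<gamma> + \<alpha>) / 2}" for t using nz[of t] that g0 ga by auto
      show "continuous_on {\<gamma> / 2..(\<gamma> + \<alpha>) / 2} (\<lambda>t. h t - c - q t / z t)"
        using continuous_on_subset[OF ch sub'] continuous_on_subset[OF cq sub'] cz'
        by (intro continuous_intros) (auto dest: nz')
      fix x assume "\<gamma> / 2 < x" "x < (\<gamma> + \<alpha>) / 2" "x \<noteq> \<gamma>"
      thus "(z has_real_derivative (h x - c - q x / z x)) (at x)" using dz g0 ga by auto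
    qed
    have "bvp_sol h q \<alpha> c z" unfolding bvp_sol_def
    proof (intro conjI ballI)
      show "continuous_on {0..\<alpha>} z" by (rule cz)
      show "z 0 = 0" using P2.solD(4)[OF S2] g0 by (simp add: z_def)
      show "z \<alpha> = 0" using P1.solD(4)[OF S1] ga by (simp add: z_def)
      fix x assume "x \<in> {0<..<\<alpha>}"
      hence x: "0 < x" "x < \<alpha>" by auto
      show "z x < 0" by (rule nz[OF x])
      show "(z has_real_derivative (h x - c - q x / z x)) (at x)"
        using dz[OF x] dzg by (cases "x = \<gamma>") auto
    qed
    thus ?thesis unfolding z_def .
  qed
  have ex_c1: "\<exists>c1. a c1 = b c1 \<and> a c1 < 0" if lt: "c11 < c12"
  proof -
    define m where "m c = a c - b c" for c
    have cm: "continuous_on {p..r} m" for p r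
      unfolding m_def by (intro continuous_at_imp_continuous_on ballI isCont_diff acont bcont)
    define p where "p = min 0 (b 0 / (\<alpha> - \<gamma>) - Ka)"
    define r where "r = max 0 (Kb - a 0 / \<gamma>)"
    have mp: "m p \<le> 0"
    proof -
      have "a p \<le> (\<alpha> - \<gamma>) * (Ka + p)" using Ka by blast
      also have "\<dots> \<le> (\<alpha> - \<gamma>) * (b 0 / (\<alpha> - \<gamma>))" using ga by (intro mult_left_mono) (auto simp: p_def)
      also have "\<dots> = b 0" using ga by simp
      also have "\<dots> \<le> b p" by (rule bmono) (simp add: p_def)
      finally show ?thesis by (simp add: m_def)
    qed
    have mr: "0 \<le> m r"
    proof -
      have "b r \<le> \<gamma> * (Kb - r)" by (rule Kb)
      also have "\<dots> \<le> \<gamma> * (a 0 / \<gamma>)" using g0 by (intro mult_left_mono) (auto simp: r_def)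
      also have "\<dots> = a 0" using g0 by simp
      also have "\<dots> \<le> a r" by (rule amono) (simp add: r_def)
      finally show ?thesis by (simp add: m_def)
    qed
    have pr: "p \<le> r" by (simp add: p_def r_def)
    obtain c1 where c1: "p \<le> c1" "c1 \<le> r" "m c1 = 0" using IVT'[of m p 0 r, OF mp mr pr cm] by blast
    have eq: "a c1 = b c1" using c1(3) by (simp add: m_def)
    have "a c1 < 0"
    proof (rule ccontr)
      assume "\<not> a c1 < 0"
      hence "a c1 = 0" using ale[of c1] by simp
      hence "\<not> ereal c1 < c12" "\<not> c11 < ereal c1" using achar[of c1] bchar[of c1] eq by auto
      hence "c12 \<le> ereal c1" "ereal c1 \<le> c11" by (simp_all add: not_less)
      hence "c12 \<le> c11" by (rule order_trans)
      thus False using lt by simp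
    qed
    thus ?thesis using eq by blast
  qed
  have uniqc: "c = c'" if "a c = b c" "a c < 0" "a c' = b c'" "a c' < 0" for c c'
  proof (rule ccontr)
    assume "c \<noteq> c'"
    hence "c < c' \<or> c' < c" by linarith
    thus False
    proof
      assume lt: "c < c'"
      have "a c < a c'" by (rule astrict[OF lt that(2)])
      moreover have "b c' \<le> b c" by (rule bmono) (use lt in simp)
      ultimately show False using that by simp
    next
      assume lt: "c' < c"
      have "a c' < a c" by (rule astrict[OF lt that(4)])
      moreover have "b c \<le> b c'" by (rule bmono) (use lt in simp)
      ultimately show False using that by simp
    qed
  qed
  show ?thesis
  proof (intro conjI impI)
    show "(\<exists>c z. bvp_sol h q \<alpha> c z) \<longleftrightarrow> c11 < c12"
    proof
      assume "\<exists>c z. bvp_sol h q \<alpha> c z"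
      then obtain c z where bv: "bvp_sol h q \<alpha> c z" by blast
      have "a c < 0" "b c < 0" using solab[OF bv] by auto
      hence "ereal c < c12" "c11 < ereal c" using achar bchar by auto
      thus "c11 < c12" by (rule less_trans[rotated])
    next
      assume "c11 < c12"
      then obtain c1 where "a c1 = b c1" "a c1 < 0" using ex_c1 by blast
      thus "\<exists>c z. bvp_sol h q \<alpha> c z" using glue by blast
    qed
  next
    assume lt: "c11 < c12"
    obtain c1 where c1: "a c1 = b c1" "a c1 < 0" using ex_c1[OF lt] by blast
    show "\<exists>c1. c11 < ereal c1 \<and> ereal c1 < c12 \<and>
                (\<exists>z. bvp_sol h q \<alpha> c1 z) \<and>
                (\<forall>c z. bvp_sol h q \<alpha> c z \<longrightarrow> c = c1) \<and>
                (\<forall>z1 z2. bvp_sol h q \<alpha> c1 z1 \<longrightarrow> bvp_sol h q \<alpha> c1 z2 \<longrightarrow>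
                          (\<forall>x\<in>{0..\<alpha>}. z1 x = z2 x))"
    proof (intro exI[of _ c1] conjI allI impI ballI)
      show "c11 < ereal c1" using bchar[of c1] c1 by simp
      show "ereal c1 < c12" using achar[of c1] c1 by simp
      show "\<exists>z. bvp_sol h q \<alpha> c1 z" using glue[OF c1] by blast
      fix c z assume bv: "bvp_sol h q \<alpha> c z"
      show "c = c1" using solab[OF bv] c1 uniqc[of c c1] by auto
    next
      fix z1 z2 x assume bv1: "bvp_sol h q \<alpha> c1 z1" and bv2: "bvp_sol h q \<alpha> c1 z2" and x: "x \<in> {0..\<alpha>}"
      show "z1 x = z2 x"
      proof (cases "x \<le> \<gamma>")
        case True
        hence xx: "1 - x \<in> {1 - \<gamma>..1}" using x by auto
        have "Z2 c1 (1 - x) = z1 (1 - (1 - x))" using restr[OF bv1] xx by blast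
        moreover have "Z2 c1 (1 - x) = z2 (1 - (1 - x))" using restr[OF bv2] xx by blast
        ultimately show ?thesis by simp
      next
        case False
        hence xx: "x \<in> {\<gamma>..\<alpha>}" using x by auto
        have "Z1 c1 x = z1 x" using restr[OF bv1] xx by blast
        moreover have "Z1 c1 x = z2 x" using restr[OF bv2] xx by blast
        ultimately show ?thesis by simp
      qed
    qed
  qed
qed


end
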